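(* Let $n\ge2$, let $v\in\mathbb A^{n-1}$, and let $x\ne x'$ be elements of $\Lambda$. Then for all $z\in v+x+V$ and $z'\in v+x'+V$ one has $\|z-z'\|\ge\frac1{n-1}$. In particular, for each $i$ the sets of $\mathfrak U_i=\{g_i+x+V:x\in\Lambda\}$ are pairwise at distance at least $1/(n-1)$.
   Context: $\mathbb A^{n-1}=\{x\in\mathbb R^n:\sum_{i=1}^n x_i=0\}$ with the norm $\|x\|=\sum_i|x_i|$. For a nonempty proper subset $I\subset\{1,\dots,n\}$ with complement $I^c$, set $\phi_I(x)=\frac{\sum_{i\in I}x_i}{\#I}-\frac{\sum_{i\notin I}x_i}{\#I^c}$. Let $V=\{x\in\mathbb A^{n-1}:\phi_I(x)\le\tfrac12$ for all nonempty proper $I\}$ and $\Lambda=\mathbb A^{n-1}\cap\mathbb Z^n$. For $i=0,\dots,n-1$ let $g_i\in\mathbb A^{n-1}$ be the vector with coordinates $(g_i)_j=(i-n)/n$ for $j\le i$ and $(g_i)_j=i/n$ for $j>i$. *)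

theory Defs
  imports Complex_Main "HOL-Library.Function_Algebras"
begin

text \<open>Points of R^n are represented as functions nat => real, with coordinates
  indexed by {1..n} and required to vanish outside {1..n}.\<close>

definition hyp :: "nat \<Rightarrow> (nat \<Rightarrow> real) set" where
  "hyp n = {x. (\<forall>j. j \<notin> {1..n} \<longrightarrow> x j = 0) \<and> (\<Sum>i=1..n. x i) = 0}"

definition l1norm :: "nat \<Rightarrow> (nat \<Rightarrow> real) \<Rightarrow> real" where
  "l1norm n x = (\<Sum>i=1..n. \<bar>x i\<bar>)"

definition phi :: "nat \<Rightarrow> nat set \<Rightarrow> (nat \<Rightarrow> real) \<Rightarrow> real" where
  "phi n I x = (\<Sum>i\<in>I. x i) / real (card I)
             - (\<Sum>i\<in>{1..n} - I. x i) / real (card ({1..n} - I))"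

definition Vset :: "nat \<Rightarrow> (nat \<Rightarrow> real) set" where
  "Vset n = {x \<in> hyp n. \<forall>I. I \<noteq> {} \<and> I \<subset> {1..n} \<longrightarrow> phi n I x \<le> 1/2}"

definition Lambda :: "nat \<Rightarrow> (nat \<Rightarrow> real) set" where
  "Lambda n = {x \<in> hyp n. \<forall>i. x i \<in> \<int>}"

definition gvec :: "nat \<Rightarrow> nat \<Rightarrow> (nat \<Rightarrow> real)" where
  "gvec n i = (\<lambda>j. if j \<in> {1..n} then (if j \<le> i then (real i - real n) / real n
                                      else real i / real n) else 0)"

definition shift :: "(nat \<Rightarrow> real) \<Rightarrow> (nat \<Rightarrow> real) set \<Rightarrow> (nat \<Rightarrow> real) set" where
  "shift a S = (\<lambda>y. a + y) ` S"

end

theory Submission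
  imports Defs
begin

lemma V_bound:
  assumes y: "y \<in> Vset n" and I: "I \<noteq> {}" "I \<subset> {1..n}"
  shows "(\<Sum>i\<in>I. y i) * real n \<le> real (card I) * real (card ({1..n}-I)) / 2"
proof -
  define J where "J = {1..n} - I"
  define a where "a = real (card I)"
  define b where "b = real (card J)"
  define s where "s = (\<Sum>i\<in>I. y i)"
  have hy: "(\<Sum>i=1..n. y i) = 0" using y by (simp add: Vset_def hyp_def)
  have fin: "finite I" using I by (meson finite_atLeastAtMost finite_subset psubset_imp_subset)
  have spl: "(\<Sum>i=1..n. y i) = (\<Sum>i\<in>J. y i) + s"
    unfolding J_def s_def using I by (intro sum.subset_diff) auto
  have sJ: "(\<Sum>i\<in>J. y i) = - s" using hy spl by simp
  have Jne: "J \<noteq> {}" using I unfolding J_def by auto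
  have a1: "a \<ge> 1" using I fin unfolding a_def by (simp add: Suc_leI card_gt_0_iff)
  have b1: "b \<ge> 1" using Jne unfolding b_def J_def by (simp add: Suc_leI card_gt_0_iff)
  have ab: "a + b = real n"
  proof -
    have "card J = n - card I" unfolding J_def using I by (simp add: card_Diff_subset fin)
    moreover have "card I \<le> n" using I by (metis card_atLeastAtMost card_mono diff_Suc_1 finite_atLeastAtMost psubset_imp_subset)
    ultimately show ?thesis unfolding a_def b_def by simp
  qed
  have "phi n I y \<le> 1/2" using y I by (auto simp: Vset_def)
  hence "s / a + s / b \<le> 1/2" unfolding phi_def a_def b_def s_def J_def using sJ[unfolded J_def]
    by (simp add: s_def)
  hence "(s / a + s / b) * (a*b) \<le> 1/2 * (a*b)" using a1 b1 by (intro mult_right_mono) auto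
  moreover have "(s / a + s / b) * (a*b) = s * (a + b)" using a1 b1 by (simp add: field_simps)
  ultimately have "s * (a + b) \<le> a*b/2" by simp
  thus ?thesis using ab unfolding s_def a_def b_def J_def by simp
qed

lemma split_sum:
  assumes "I \<subseteq> {1..(n::nat)}"
  shows "(\<Sum>i=1..n. f i) = (\<Sum>i\<in>I. f i) + (\<Sum>i\<in>{1..n}-I. (f i::real))"
  using sum.subset_diff[OF assms, of f] by simp

lemma core:
  assumes n2: "n \<ge> 2" and x: "x \<in> Lambda n" and x': "x' \<in> Lambda n" and ne: "x \<noteq> x'"
    and y: "y \<in> Vset n" and y': "y' \<in> Vset n"
  shows "l1norm n ((x + y) - (x' + y')) \<ge> 1 / (real n - 1)"
proof -
  define w where "w = x - x'"
  define u where "u = (x + y) - (x' + y')"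
  have hx: "\<forall>j. j \<notin> {1..n} \<longrightarrow> x j = 0" "(\<Sum>i=1..n. x i) = 0" "\<forall>i. x i \<in> \<int>"
    using x by (auto simp: Lambda_def hyp_def)
  have hx': "\<forall>j. j \<notin> {1..n} \<longrightarrow> x' j = 0" "(\<Sum>i=1..n. x' i) = 0" "\<forall>i. x' i \<in> \<int>"
    using x' by (auto simp: Lambda_def hyp_def)
  have hy: "(\<Sum>i=1..n. y i) = 0" using y by (simp add: Vset_def hyp_def)
  have hy': "(\<Sum>i=1..n. y' i) = 0" using y' by (simp add: Vset_def hyp_def)
  have wint: "w i \<in> \<int>" for i using hx(3) hx'(3) unfolding w_def by simp
  have wint1: "w i \<ge> 1" if "w i > 0" for i
  proof -
    obtain m where "w i = of_int m" using wint[of i] Ints_cases by blast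
    thus ?thesis using that by simp
  qed
  have wint0: "w i \<le> 0" if "w i < 1" for i
  proof -
    obtain m where "w i = of_int m" using wint[of i] Ints_cases by blast
    thus ?thesis using that by simp
  qed
  have wsum: "(\<Sum>i=1..n. w i) = 0" using hx(2) hx'(2) unfolding w_def by (simp add: sum_subtractf)
  obtain j where j: "j \<in> {1..n}" "w j \<noteq> 0"
  proof -
    obtain j where jj: "x j \<noteq> x' j" using ne by auto
    hence "j \<in> {1..n}" using hx(1) hx'(1) by metis
    moreover have "w j \<noteq> 0" using jj by (simp add: w_def)
    ultimately show ?thesis using that by blast
  qed
  obtain k where k: "k \<in> {1..n}" "w k \<ge> 1"
  proof (cases "w j > 0")
    case True thus ?thesis using that j wint1 by blast
  next
    case False
    show ?thesis
    proof (rule ccontr)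
      assume "\<not> ?thesis"
      hence all: "\<forall>i\<in>{1..n}. w i \<le> 0" using that wint1 by force
      have "(\<Sum>i=1..n. - w i) = 0" using wsum by (simp add: sum_negf)
      hence "\<forall>i\<in>{1..n}. - w i = 0" using all by (subst sum_nonneg_eq_0_iff[symmetric]) auto
      thus False using j by auto
    qed
  qed
  define I where "I = {i\<in>{1..n}. w i \<ge> 1}"
  define J where "J = {1..n} - I"
  define a where "a = real (card I)"
  define b where "b = real (card J)"
  have Isub: "I \<subseteq> {1..n}" unfolding I_def by auto
  have Ine: "I \<noteq> {}" using k unfolding I_def by auto
  have finI: "finite I" using Isub finite_subset by blast
  have Ineq: "I \<noteq> {1..n}"
  proof
    assume "I = {1..n}"
    hence "\<forall>i\<in>{1..n}. 1 \<le> w i" unfolding I_def by auto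
    hence "(\<Sum>i=1..n. (1::real)) \<le> (\<Sum>i=1..n. w i)" by (intro sum_mono) auto
    thus False using wsum n2 by simp
  qed
  have Ipsub: "I \<subset> {1..n}" using Isub Ineq by auto
  have Jne: "J \<noteq> {}" using Ipsub unfolding J_def by auto
  have Jpsub: "J \<subset> {1..n}" using Ine Isub unfolding J_def by auto
  have JI: "{1..n} - J = I" using Isub unfolding J_def by auto
  have wJ: "\<forall>i\<in>J. w i \<le> 0" unfolding J_def I_def using wint0 by force
  have a1: "a \<ge> 1" using Ine finI unfolding a_def by (simp add: Suc_leI card_gt_0_iff)
  have ab: "a + b = real n"
  proof -
    have "card J = n - card I" unfolding J_def using Isub by (simp add: card_Diff_subset finI)
    moreover have "card I \<le> n" using Isub by (metis card_atLeastAtMost card_mono diff_Suc_1 finite_atLeastAtMost)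
    ultimately show ?thesis unfolding a_def b_def by simp
  qed
  have SIw: "(\<Sum>i\<in>I. w i) \<ge> a"
  proof -
    have "(\<Sum>i\<in>I. (1::real)) \<le> (\<Sum>i\<in>I. w i)" by (intro sum_mono) (auto simp: I_def)
    thus ?thesis unfolding a_def by simp
  qed
  have B1: "(\<Sum>i\<in>I. y' i) * real n \<le> a * b / 2"
    using V_bound[OF y' Ine Ipsub] unfolding a_def b_def J_def by simp
  have B2: "(\<Sum>i\<in>J. y i) * real n \<le> b * a / 2"
    using V_bound[OF y Jne Jpsub] unfolding a_def b_def JI by simp
  have yJ: "(\<Sum>i\<in>J. y i) = - (\<Sum>i\<in>I. y i)" using split_sum[OF Isub, of y] hy unfolding J_def by simp
  have uI: "(\<Sum>i\<in>I. u i) = (\<Sum>i\<in>I. w i) + (\<Sum>i\<in>I. y i) - (\<Sum>i\<in>I. y' i)"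
    unfolding u_def w_def by (simp add: sum.distrib sum_subtractf algebra_simps)
  have C1: "(\<Sum>i\<in>I. u i) * real n \<ge> a * real n - a * b"
  proof -
    have "(\<Sum>i\<in>I. w i) * real n \<ge> a * real n" using SIw by (simp add: mult_right_mono)
    moreover have "(\<Sum>i\<in>I. u i) * real n = (\<Sum>i\<in>I. w i) * real n + (\<Sum>i\<in>I. y i) * real n - (\<Sum>i\<in>I. y' i) * real n"
      unfolding uI by (simp add: left_diff_distrib distrib_right)
    moreover have "(\<Sum>i\<in>I. y i) * real n = - ((\<Sum>i\<in>J. y i) * real n)" using yJ by simp
    ultimately show ?thesis using B1 B2 by (simp add: algebra_simps)
  qed
  have C2: "a * real n - a * b = a * a" unfolding ab[symmetric] by (simp add: algebra_simps)
  have C3: "a * a \<ge> 1" using mult_mono[OF a1 a1] a1 by simp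
  have SIu: "(\<Sum>i\<in>I. u i) * real n \<ge> 1" using C1 C2 C3 by linarith
  have usum: "(\<Sum>i=1..n. u i) = 0" using hx(2) hx'(2) hy hy' unfolding u_def
    by (simp add: sum.distrib sum_subtractf)
  have uJ: "(\<Sum>i\<in>J. u i) = - (\<Sum>i\<in>I. u i)" using split_sum[OF Isub, of u] usum unfolding J_def by simp
  have "l1norm n u = (\<Sum>i\<in>I. \<bar>u i\<bar>) + (\<Sum>i\<in>J. \<bar>u i\<bar>)"
    unfolding l1norm_def J_def by (rule split_sum[OF Isub])
  also have "\<dots> \<ge> (\<Sum>i\<in>I. u i) + (\<Sum>i\<in>J. - u i)"
    by (intro add_mono sum_mono) auto
  finally have "l1norm n u \<ge> 2 * (\<Sum>i\<in>I. u i)" using uJ by (simp add: sum_negf)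
  moreover have "2 * (\<Sum>i\<in>I. u i) \<ge> 1 / (real n - 1)"
  proof -
    have np: "real n > 1" using n2 by simp
    have "2 * (\<Sum>i\<in>I. u i) \<ge> 2 / real n" using SIu np by (simp add: field_simps)
    moreover have "2 / real n \<ge> 1 / (real n - 1)" using np n2 by (simp add: field_simps)
    ultimately show ?thesis by linarith
  qed
  ultimately show ?thesis unfolding u_def by linarith
qed

theorem lemma4p1p3:
  fixes n :: nat and v :: "nat \<Rightarrow> real"
  assumes "n \<ge> 2" and "v \<in> hyp n"
  shows "(\<forall>x\<in>Lambda n. \<forall>x'\<in>Lambda n. x \<noteq> x' \<longrightarrow>
            (\<forall>z\<in>shift (v + x) (Vset n). \<forall>z'\<in>shift (v + x') (Vset n).
               l1norm n (z - z') \<ge> 1 / (real n - 1)))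
       \<and> (\<forall>i<n. \<forall>x\<in>Lambda n. \<forall>x'\<in>Lambda n. x \<noteq> x' \<longrightarrow>
            (\<forall>z\<in>shift (gvec n i + x) (Vset n). \<forall>z'\<in>shift (gvec n i + x') (Vset n).
               l1norm n (z - z') \<ge> 1 / (real n - 1)))"
proof -
  have gen: "l1norm n (z - z') \<ge> 1 / (real n - 1)"
    if H: "x \<in> Lambda n" "x' \<in> Lambda n" "x \<noteq> x'" "z \<in> shift (c + x) (Vset n)"
       "z' \<in> shift (c + x') (Vset n)" for c x x' z z'
  proof -
    obtain y where y: "y \<in> Vset n" "z = c + x + y" using H(4) unfolding shift_def by auto
    obtain y' where y': "y' \<in> Vset n" "z' = c + x' + y'" using H(5) unfolding shift_def by auto
    have "z - z' = (x + y) - (x' + y')" using y y' by (simp add: algebra_simps)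
    thus ?thesis using core[OF assms(1) H(1-3) y(1) y'(1)] by simp
  qed
  show ?thesis using gen by blast
qed

end
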